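(* Let $q$ be a prime power, $m\ge1$, $1\le k<n$. Let $E\in \mathcal T(k,n)$ and let $\mathcal{U}_0 := \{(u_1,\dots,u_n) \in \mathbb{F}_q^n \mid u_{k+1}=\dots=u_n=0 \}$. Then $\deg f_E=k-\dim\left(\mathrm{rs}(E)\cap \mathcal{U}_0 \right)$.
   Context: $\mathcal T(k,n)=\{E\in \mathbb{F}_q^{k\times n} \mid E \text{ is in reduced row echelon form and } \mathrm{rk}(E)=k\}$; $\mathrm{rs}(E)$ is the $\mathbb{F}_q$-row space of $E$. Let $X$ be the $k\times(n-k)$ matrix whose entries are the distinct indeterminates $x_1,\dots,x_{k(n-k)}$. For $E\in\mathcal T(k,n)$, $f_E:=\det([\,I_k\mid X\,]E^T)\in\mathbb{F}_{q^m}[x_1,\dots,x_{k(n-k)}]$, and $\deg$ denotes total degree. *)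

theory Defs
  imports "Jordan_Normal_Form.Determinant" "Jordan_Normal_Form.Gauss_Jordan_Elimination"
          "Jordan_Normal_Form.DL_Rank" "Jordan_Normal_Form.VS_Connect"
          "HOL-Library.Poly_Mapping" "HOL-Computational_Algebra.Primes"
begin

type_synonym 'b mpoly = "(nat \<Rightarrow>\<^sub>0 nat) \<Rightarrow>\<^sub>0 'b"

definition mp_var :: "nat \<Rightarrow> 'b::comm_ring_1 mpoly" where
  "mp_var i = Poly_Mapping.single (Poly_Mapping.single i 1) 1"

definition mp_const :: "'b::comm_ring_1 \<Rightarrow> 'b mpoly" where
  "mp_const c = Poly_Mapping.single 0 c"

text \<open>Total degree (the zero polynomial gets degree 0 by convention).\<close>
definition total_degree :: "'b::zero mpoly \<Rightarrow> nat" where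
  "total_degree p = Max (insert 0 ((\<lambda>mon. \<Sum>i\<in>Poly_Mapping.keys mon. Poly_Mapping.lookup mon i) ` Poly_Mapping.keys p))"

text \<open>The matrix [I_k | X], where X is k x (n-k) with entry (i,j) the variable number i*(n-k)+j
  (0-based indices; these are k(n-k) distinct indeterminates).\<close>
definition IX_mat :: "nat \<Rightarrow> nat \<Rightarrow> 'b::comm_ring_1 mpoly mat" where
  "IX_mat k n = mat k n (\<lambda>(i,j). if j < k then (if i = j then 1 else 0)
                                   else mp_var (i * (n - k) + (j - k)))"

text \<open>f_E = det([I_k | X] E^T), with E over F_q embedded into F_{q^m} via phi.\<close>
definition f_E :: "('a \<Rightarrow> 'b) \<Rightarrow> nat \<Rightarrow> nat \<Rightarrow> 'a mat \<Rightarrow> 'b::comm_ring_1 mpoly" where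
  "f_E phi k n E = det (IX_mat k n * transpose_mat (map_mat (\<lambda>a. mp_const (phi a)) E))"

text \<open>T(k,n): k x n matrices in reduced row echelon form of rank k.
  (row_echelon_form of JNF requires leading ones and zeros above/below pivots, i.e. reduced form.)\<close>
definition T_set :: "nat \<Rightarrow> nat \<Rightarrow> 'a::field mat set" where
  "T_set k n = {E. E \<in> carrier_mat k n \<and> row_echelon_form E \<and> vec_space.rank k E = k}"

definition U0 :: "nat \<Rightarrow> nat \<Rightarrow> 'a::field vec set" where
  "U0 k n = {u \<in> carrier_vec n. \<forall>i. k \<le> i \<and> i < n \<longrightarrow> u $ i = 0}"

definition subspace_dim :: "nat \<Rightarrow> 'a::field vec set \<Rightarrow> nat" where
  "subspace_dim n W = vectorspace.dim class_ring ((module_vec TYPE('a) n)\<lparr>carrier := W\<rparr>)"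

end

theory Submission
  imports Defs
begin


definition mdeg :: "(nat \<Rightarrow>\<^sub>0 nat) \<Rightarrow> nat" where
  "mdeg m = (\<Sum>i\<in>Poly_Mapping.keys m. Poly_Mapping.lookup m i)"

lemma mdeg_superset: "finite S \<Longrightarrow> Poly_Mapping.keys m \<subseteq> S \<Longrightarrow> mdeg m = (\<Sum>i\<in>S. Poly_Mapping.lookup m i)"
  unfolding mdeg_def by (rule sum.mono_neutral_left) (auto simp: in_keys_iff)

lemma mdeg_add: "mdeg (a + b) = mdeg a + mdeg b"
proof -
  let ?S = "Poly_Mapping.keys a \<union> Poly_Mapping.keys b"
  have "mdeg (a+b) = (\<Sum>i\<in>?S. Poly_Mapping.lookup (a+b) i)"
    by (rule mdeg_superset) (auto simp: keys_add)
  also have "\<dots> = (\<Sum>i\<in>?S. Poly_Mapping.lookup a i) + (\<Sum>i\<in>?S. Poly_Mapping.lookup b i)"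
    by (simp add: lookup_add sum.distrib)
  also have "\<dots> = mdeg a + mdeg b" by (subst (1 2) mdeg_superset[of ?S]) auto
  finally show ?thesis .
qed

lemma total_degree_le_iff:
  "total_degree p \<le> d \<longleftrightarrow> (\<forall>m\<in>Poly_Mapping.keys p. mdeg m \<le> d)"
  unfolding total_degree_def mdeg_def[symmetric] by auto

lemma total_degree_geI: "m \<in> Poly_Mapping.keys p \<Longrightarrow> mdeg m \<le> total_degree p"
  using total_degree_le_iff[of p "total_degree p"] by simp

lemma td_add: fixes p q :: "'b::comm_ring_1 mpoly" shows "total_degree (p + q) \<le> max (total_degree p) (total_degree q)"
  unfolding total_degree_le_iff
proof
  fix m assume "m \<in> Poly_Mapping.keys (p+q)"
  then have "m \<in> Poly_Mapping.keys p \<or> m \<in> Poly_Mapping.keys q" using keys_add[of p q] by blast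
  then show "mdeg m \<le> max (total_degree p) (total_degree q)"
  proof
    assume "m \<in> Poly_Mapping.keys p"
    then have "mdeg m \<le> total_degree p" by (rule total_degree_geI)
    then show ?thesis by simp
  next
    assume "m \<in> Poly_Mapping.keys q"
    then have "mdeg m \<le> total_degree q" by (rule total_degree_geI)
    then show ?thesis by simp
  qed
qed

lemma td_mult: fixes p q :: "'b::comm_ring_1 mpoly" shows "total_degree (p * q) \<le> total_degree p + total_degree q"
  unfolding total_degree_le_iff
proof
  fix m assume "m \<in> Poly_Mapping.keys (p*q)"
  then obtain a b where "m = a + b" "a \<in> Poly_Mapping.keys p" "b \<in> Poly_Mapping.keys q"
    using keys_mult[of p q] by blast
  then show "mdeg m \<le> total_degree p + total_degree q"
    using total_degree_geI[of a p] total_degree_geI[of b q] by (simp add: mdeg_add)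
qed

lemma td_uminus: fixes p :: "'b::comm_ring_1 mpoly" shows "total_degree (- p) = total_degree p"
  unfolding total_degree_def by simp

lemma td_sum: fixes f :: "'x \<Rightarrow> 'b::comm_ring_1 mpoly" shows "(\<And>x. x \<in> A \<Longrightarrow> total_degree (f x) \<le> d) \<Longrightarrow> total_degree (sum f A) \<le> d"
proof (induction A rule: infinite_finite_induct)
  case (infinite A) then show ?case by (simp add: total_degree_def)
next
  case empty then show ?case by (simp add: total_degree_def)
next
  case (insert x F)
  have "total_degree (f x + sum f F) \<le> max (total_degree (f x)) (total_degree (sum f F))"
    by (rule td_add)
  also have "\<dots> \<le> d" using insert by auto
  finally show ?case using insert by simp
qed

lemma td_prod: fixes f :: "'x \<Rightarrow> 'b::comm_ring_1 mpoly" shows "total_degree (prod f A) \<le> (\<Sum>x\<in>A. total_degree (f x))"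
proof (induction A rule: infinite_finite_induct)
  case (infinite A) then show ?case by (simp add: total_degree_def)
next
  case empty then show ?case by (simp add: total_degree_def)
next
  case (insert x F)
  then show ?case using td_mult[of "f x" "prod f F"] by auto
qed

lemma td_const0: fixes p :: "'b::comm_ring_1 mpoly" shows "Poly_Mapping.keys p \<subseteq> {0} \<Longrightarrow> total_degree p = 0"
  using total_degree_le_iff[of p 0] by (auto simp: mdeg_def)

lemma td_mp_const: "total_degree (mp_const c :: 'b::comm_ring_1 mpoly) = 0"
  by (rule td_const0) (auto simp: mp_const_def)

lemma td_of_int: "total_degree (of_int c :: 'b::comm_ring_1 mpoly) = 0"
  by (rule td_const0) (auto simp: in_keys_iff lookup_of_int)

lemma td_one: "total_degree (1 :: 'b::comm_ring_1 mpoly) = 0"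
  using td_of_int[of 1] by simp

lemma td_zero: "total_degree (0 :: 'b::comm_ring_1 mpoly) = 0"
  using td_of_int[of 0] by simp

lemma td_mp_var: "total_degree (mp_var i :: 'b::comm_ring_1 mpoly) \<le> 1"
  unfolding total_degree_le_iff mp_var_def
  by (auto simp: mdeg_def split: if_splits)

lemma mp_const_add: "mp_const (a + b) = mp_const a + mp_const b"
  by (simp add: mp_const_def single_add)
lemma mp_const_mult: "mp_const (a * b) = mp_const a * mp_const b"
  by (simp add: mp_const_def mult_single)
lemma mp_const_one: "mp_const 1 = 1"
  by (simp add: mp_const_def)
lemma mp_const_zero: "mp_const 0 = 0"
  by (simp add: mp_const_def)

lemma pm_expansion: "p = (\<Sum>m\<in>Poly_Mapping.keys p. Poly_Mapping.single m (Poly_Mapping.lookup p m))"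
proof -
  have *: "finite I
        \<Longrightarrow> Poly_Mapping.lookup (\<Sum>i\<in>I. Poly_Mapping.single i (Poly_Mapping.lookup p i)) j =
            (if j \<in> I then Poly_Mapping.lookup p j else 0)" for I j
    by (induction I rule: finite_induct) (auto simp: lookup_single lookup_add when_def)
  show ?thesis
    by (rule poly_mapping_eqI) (fastforce simp add: in_keys_iff *)
qed

definition mono_ev :: "(nat \<Rightarrow> 'b::comm_ring_1 poly) \<Rightarrow> (nat \<Rightarrow>\<^sub>0 nat) \<Rightarrow> 'b poly" where
  "mono_ev s m = (\<Prod>i\<in>Poly_Mapping.keys m. s i ^ Poly_Mapping.lookup m i)"

definition mp_ev :: "(nat \<Rightarrow> 'b::comm_ring_1 poly) \<Rightarrow> 'b mpoly \<Rightarrow> 'b poly" where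
  "mp_ev s p = (\<Sum>m\<in>Poly_Mapping.keys p. Polynomial.smult (Poly_Mapping.lookup p m) (mono_ev s m))"

lemma mono_ev_superset: "finite S \<Longrightarrow> Poly_Mapping.keys m \<subseteq> S \<Longrightarrow>
   mono_ev s m = (\<Prod>i\<in>S. s i ^ Poly_Mapping.lookup m i)"
  unfolding mono_ev_def by (rule prod.mono_neutral_left) (auto simp: in_keys_iff)

lemma mono_ev_add: "mono_ev s (a + b) = mono_ev s a * mono_ev s b"
proof -
  let ?S = "Poly_Mapping.keys a \<union> Poly_Mapping.keys b"
  have "mono_ev s (a+b) = (\<Prod>i\<in>?S. s i ^ Poly_Mapping.lookup (a+b) i)"
    by (rule mono_ev_superset) (auto simp: keys_add)
  also have "\<dots> = (\<Prod>i\<in>?S. s i ^ Poly_Mapping.lookup a i) * (\<Prod>i\<in>?S. s i ^ Poly_Mapping.lookup b i)"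
    by (simp add: lookup_add power_add prod.distrib)
  also have "\<dots> = mono_ev s a * mono_ev s b" by (subst (1 2) mono_ev_superset[of ?S]) auto
  finally show ?thesis .
qed

lemma mono_ev_zero: "mono_ev s 0 = 1"
  by (simp add: mono_ev_def)

lemma mp_ev_superset: "finite S \<Longrightarrow> Poly_Mapping.keys p \<subseteq> S \<Longrightarrow>
   mp_ev s p = (\<Sum>m\<in>S. Polynomial.smult (Poly_Mapping.lookup p m) (mono_ev s m))"
  unfolding mp_ev_def by (rule sum.mono_neutral_left) (auto simp: in_keys_iff)

lemma mp_ev_add: "mp_ev s (p + q) = mp_ev s p + mp_ev s q"
proof -
  let ?S = "Poly_Mapping.keys p \<union> Poly_Mapping.keys q"
  have "mp_ev s (p+q) = (\<Sum>m\<in>?S. Polynomial.smult (Poly_Mapping.lookup (p+q) m) (mono_ev s m))"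
    by (rule mp_ev_superset) (auto simp: keys_add)
  also have "\<dots> = (\<Sum>m\<in>?S. Polynomial.smult (Poly_Mapping.lookup p m) (mono_ev s m)) + (\<Sum>m\<in>?S. Polynomial.smult (Poly_Mapping.lookup q m) (mono_ev s m))"
    by (simp add: lookup_add smult_add_left sum.distrib)
  also have "\<dots> = mp_ev s p + mp_ev s q" by (subst (1 2) mp_ev_superset[of ?S]) auto
  finally show ?thesis .
qed

lemma mp_ev_zero: "mp_ev s 0 = 0"
  by (simp add: mp_ev_def)

lemma mp_ev_sum: "mp_ev s (sum f A) = (\<Sum>x\<in>A. mp_ev s (f x))"
  by (induction A rule: infinite_finite_induct) (auto simp: mp_ev_zero mp_ev_add)

lemma mp_ev_single: "mp_ev s (Poly_Mapping.single m c) = Polynomial.smult c (mono_ev s m)"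
  by (cases "c = 0") (auto simp: mp_ev_def mp_ev_zero)

lemma mp_ev_mult: "mp_ev s (p * q) = mp_ev s p * mp_ev s q"
proof -
  let ?P = "Poly_Mapping.keys p" and ?Q = "Poly_Mapping.keys q"
  let ?sp = "\<lambda>m. Poly_Mapping.single m (Poly_Mapping.lookup p m)"
  let ?sq = "\<lambda>m. Poly_Mapping.single m (Poly_Mapping.lookup q m)"
  have "p * q = sum ?sp ?P * sum ?sq ?Q"
    using pm_expansion[of p] pm_expansion[of q] by simp
  also have "\<dots> = (\<Sum>a\<in>?P. \<Sum>b\<in>?Q. ?sp a * ?sq b)"
    by (rule sum_product)
  finally have pq: "p * q = (\<Sum>a\<in>?P. \<Sum>b\<in>?Q. ?sp a * ?sq b)" .
  have ev: "mp_ev s (?sp a * ?sq b) = Polynomial.smult (Poly_Mapping.lookup p a) (mono_ev s a) * Polynomial.smult (Poly_Mapping.lookup q b) (mono_ev s b)" for a b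
    unfolding mult_single mp_ev_single mono_ev_add by (simp add: ac_simps)
  have "mp_ev s (p * q) = (\<Sum>a\<in>?P. \<Sum>b\<in>?Q. Polynomial.smult (Poly_Mapping.lookup p a) (mono_ev s a) * Polynomial.smult (Poly_Mapping.lookup q b) (mono_ev s b))"
    unfolding pq mp_ev_sum ev ..
  also have "\<dots> = mp_ev s p * mp_ev s q"
    unfolding mp_ev_def by (rule sum_product[symmetric])
  finally show ?thesis .
qed

lemma mp_ev_one: "mp_ev s 1 = 1"
proof -
  have "(1 :: 'a::comm_ring_1 mpoly) = Poly_Mapping.single 0 1" by simp
  then show ?thesis by (metis mp_ev_single mono_ev_zero smult_1_left)
qed

lemma mp_ev_hom: "comm_ring_hom (mp_ev s)"
  by unfold_locales (auto simp: mp_ev_add mp_ev_mult mp_ev_one mp_ev_zero)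

lemma mp_ev_const: "mp_ev s (mp_const c) = [:c:]"
  by (simp add: mp_const_def mp_ev_single mono_ev_zero)

lemma mp_ev_var: "mp_ev s (mp_var i) = s i"
  by (simp add: mp_var_def mp_ev_single mono_ev_def)

lemma degree_mono_ev: assumes "\<And>i. degree (s i) \<le> 1" shows "degree (mono_ev s m) \<le> mdeg m"
proof -
  have "degree (mono_ev s m) \<le> (\<Sum>i\<in>Poly_Mapping.keys m. degree (s i ^ Poly_Mapping.lookup m i))"
    unfolding mono_ev_def using degree_prod_sum_le[of "Poly_Mapping.keys m" "\<lambda>i. s i ^ Poly_Mapping.lookup m i"] by (simp add: o_def)
  also have "\<dots> \<le> (\<Sum>i\<in>Poly_Mapping.keys m. Poly_Mapping.lookup m i)"
  proof (rule sum_mono)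
    fix i
    have "degree (s i ^ Poly_Mapping.lookup m i) \<le> degree (s i) * Poly_Mapping.lookup m i"
      by (rule degree_power_le)
    also have "\<dots> \<le> Poly_Mapping.lookup m i" using assms[of i] by simp
    finally show "degree (s i ^ Poly_Mapping.lookup m i) \<le> Poly_Mapping.lookup m i" .
  qed
  finally show ?thesis by (simp add: mdeg_def)
qed

lemma degree_mp_ev: assumes "\<And>i. degree (s i) \<le> 1" shows "degree (mp_ev s p) \<le> total_degree p"
  unfolding mp_ev_def
proof (rule degree_sum_le)
  fix m assume m: "m \<in> Poly_Mapping.keys p"
  have "degree (Polynomial.smult (Poly_Mapping.lookup p m) (mono_ev s m)) \<le> degree (mono_ev s m)"
    by (rule degree_smult_le)
  also have "\<dots> \<le> mdeg m" by (rule degree_mono_ev[OF assms])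
  also have "\<dots> \<le> total_degree p" using m by (rule total_degree_geI)
  finally show "degree (Polynomial.smult (Poly_Mapping.lookup p m) (mono_ev s m)) \<le> total_degree p" .
qed simp



definition Etil :: "nat \<Rightarrow> nat \<Rightarrow> 'a mat \<Rightarrow> 'a mat" where
  "Etil k n E = mat k n (\<lambda>(i,j). if j < n - k then E $$ (i, k + j) else E $$ (i, j - (n - k)))"

lemma downclosed_eq_lessThan:
  fixes T :: "nat set"
  assumes fin: "finite T" and dc: "\<And>i j. j \<in> T \<Longrightarrow> i < j \<Longrightarrow> i \<in> T"
  shows "T = {..<card T}"
proof (cases "T = {}")
  case True then show ?thesis by simp
next
  case False
  define m where "m = Max T"
  have "m \<in> T" using fin False by (simp add: m_def)
  have "T = {..m}"
  proof
    show "T \<subseteq> {..m}" using fin by (auto simp: m_def)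
    show "{..m} \<subseteq> T" using dc \<open>m \<in> T\<close> by (auto simp: le_less)
  qed
  then show ?thesis by (simp add: lessThan_Suc_atMost[symmetric])
qed

lemma sum_shift_zero:
  fixes g :: "nat \<Rightarrow> 'b::comm_monoid_add"
  assumes "r \<le> k" and "\<And>u. u < r \<Longrightarrow> g u = 0"
  shows "(\<Sum>u = 0..<k. g u) = (\<Sum>i = 0..<k - r. g (i + r))"
proof -
  have "(\<Sum>u = 0..<k. g u) = (\<Sum>u = 0..<r. g u) + (\<Sum>u = r..<k. g u)"
    using assms(1) by (simp add: sum.atLeastLessThan_concat)
  also have "(\<Sum>u = 0..<r. g u) = 0" using assms(2) by simp
  also have "(\<Sum>u = r..<k. g u) = (\<Sum>i = 0..<k - r. g (i + r))"
    using sum.shift_bounds_nat_ivl[of g 0 r "k - r"] assms(1) by simp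
  finally show ?thesis by simp
qed

locale L45 =
  fixes E :: "'a::field mat" and k n :: nat and P Q R :: "'a mat" and f :: "nat \<Rightarrow> nat"
  assumes E: "E \<in> carrier_mat k n" and kn: "k < n"
  and P: "P \<in> carrier_mat k k" and Q: "Q \<in> carrier_mat k k"
  and PQ: "P * Q = 1\<^sub>m k" and QP: "Q * P = 1\<^sub>m k"
  and RPE: "R = P * Etil k n E"
  and piv: "pivot_fun R f n"
  and rk: "vec_space.rank k E = k"
begin

abbreviation "s \<equiv> n - k"
definition "E' = P * E"
definition "r = card {i. i < k \<and> f i < s}"

lemma Et: "Etil k n E \<in> carrier_mat k n" by (simp add: Etil_def)
lemma Rc: "R \<in> carrier_mat k n" using RPE P Et by auto
lemma E'c: "E' \<in> carrier_mat k n" using P E by (simp add: E'_def)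
lemma dimR: "dim_row R = k" using Rc by auto

lemmas pv = pivot_funD[OF dimR piv]

lemma E'_R: assumes "i < k" "j < n"
  shows "E' $$ (i,j) = R $$ (i, if j < k then j + s else j - k)"
proof -
  let ?c = "if j < k then j + s else j - k"
  have c: "?c < n" using assms kn by auto
  have "col (Etil k n E) ?c = col E j"
    by (rule eq_vecI) (insert assms E kn, auto simp: Etil_def col_def)
  then show ?thesis using assms c P E Et unfolding E'_def RPE by (simp add: col_def)
qed

lemma det_P_nz: "det P \<noteq> 0"
proof
  assume "det P = 0"
  then have "det (P * Q) = 0" using det_mult[OF P Q] by simp
  then show False using PQ by simp
qed

lemma f_nc_mono: "i < k \<Longrightarrow> f i = n \<Longrightarrow> i \<le> j \<Longrightarrow> j < k \<Longrightarrow> f j = n"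
proof (induction j)
  case 0 then show ?case by simp
next
  case (Suc j)
  show ?case
  proof (cases "i = Suc j")
    case True then show ?thesis using Suc by simp
  next
    case False
    then have "f j = n" using Suc by auto
    then show ?thesis using pv(1)[of "Suc j"] pv(3)[of j] Suc by auto
  qed
qed

lemma no_zero_row: assumes i: "i < k" shows "f i < n"
proof (rule ccontr)
  assume "\<not> f i < n"
  then have "f i = n" using pv(1)[OF i] by simp
  then have fl: "f (k - 1) = n" using f_nc_mono[OF i] i by simp
  have k0: "k - 1 < k" using i by simp
  have zero: "E' $$ (k - 1, j) = 0" if "j < n" for j
    using E'_R[OF k0 that] pv(2)[OF k0] fl kn that by auto
  interpret vk: vec_space "TYPE('a)" k .
  obtain S where S: "maximal S (\<lambda>T. T \<subseteq> set (cols E) \<and> vk.lin_indpt T)"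
    using maximal_exists[of "(\<lambda>T. T \<subseteq> set (cols E) \<and> vk.lin_indpt T)" "card (set (cols E))" "{}"]
    by (meson List.finite_set card_mono empty_iff empty_subsetI vk.finite_lin_indpt2 rev_finite_subset)
  have cardS: "card S = k" using vk.rank_card_indpt[OF E S] rk by simp
  have Ssub: "S \<subseteq> set (cols E)" and Sli: "vk.lin_indpt S" using S unfolding maximal_def by auto
  have finS: "finite S" using Ssub finite_subset by blast
  obtain xs where xs: "set xs = S" "distinct xs" using finite_distinct_list[OF finS] by blast
  have lxs: "length xs = k" using xs cardS distinct_card by fastforce
  have xsc: "set xs \<subseteq> carrier_vec k" using xs Ssub E cols_dim by blast
  define B where "B = mat_of_cols k xs"
  have B: "B \<in> carrier_mat k k" using mat_of_cols_carrier(1)[of k xs] lxs by (simp add: B_def)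
  have colsB: "cols B = xs" unfolding B_def using xsc by (simp add: cols_mat_of_cols)
  have "vk.rank B = k" using vk.lin_indpt_full_rank[OF B] colsB xs Sli by simp
  then have dB: "det B \<noteq> 0" using vk.det_rank_iff[OF B] by simp
  have PB: "P * B \<in> carrier_mat k k" using P B by simp
  have row0: "(P * B) $$ (k - 1, c) = 0" if c: "c < k" for c
  proof -
    have "col B c \<in> set (cols E)" using colsB c lxs xs Ssub B
      by (metis carrier_matD(2) cols_length cols_nth nth_mem subsetD)
    then obtain j where j: "j < n" "col B c = col E j" using E
      by (metis carrier_matD(2) cols_length cols_nth in_set_conv_nth)
    have "(P * B) $$ (k - 1, c) = row P (k - 1) \<bullet> col B c" using P B c k0 by simp
    also have "\<dots> = row P (k - 1) \<bullet> col E j" using j by simp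
    also have "\<dots> = E' $$ (k - 1, j)" using P E j k0 by (simp add: E'_def)
    also have "\<dots> = 0" using zero j by simp
    finally show ?thesis .
  qed
  have "det (P * B) = 0" unfolding det_def'[OF PB]
  proof (rule sum.neutral, intro ballI)
    fix p assume "p \<in> {p. p permutes {0..<k}}"
    then have "p (k-1) < k" using permutes_in_image k0 by fastforce
    then have z: "(P*B) $$ (k-1, p (k-1)) = 0" by (rule row0)
    have "(\<Prod> i = 0..<k. (P*B) $$ (i, p i)) = 0"
      by (rule prod_zero) (use z k0 in auto)
    then show "signof p * (\<Prod> i = 0..<k. (P*B) $$ (i, p i)) = 0" by simp
  qed
  moreover have "det (P * B) \<noteq> 0" using det_mult[OF P B] det_P_nz dB by simp
  ultimately show False by simp
qed

lemma f_mono: "i < j \<Longrightarrow> j < k \<Longrightarrow> f i < f j"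
proof (induction j)
  case 0 then show ?case by simp
next
  case (Suc j)
  have "f j < f (Suc j)" using pv(3)[of j] no_zero_row[of "Suc j"] Suc by auto
  then show ?case using Suc by (cases "i = j") auto
qed

lemma f_inj: "i < k \<Longrightarrow> j < k \<Longrightarrow> f i = f j \<Longrightarrow> i = j"
  using f_mono by (metis less_irrefl nat_neq_iff)

lemma r_char: assumes "i < k" shows "f i < s \<longleftrightarrow> i < r"
proof -
  let ?T = "{i. i < k \<and> f i < s}"
  have "?T = {..<card ?T}"
    by (rule downclosed_eq_lessThan) (auto dest: f_mono)
  then show ?thesis using assms unfolding r_def by blast
qed

lemma r_le: "r \<le> k"
  unfolding r_def by (rule order_trans[OF card_mono[of "{..<k}"]]) auto

lemma e1: assumes "l < k" "r \<le> l" "k \<le> j" "j < n" shows "E' $$ (l, j) = 0"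
proof -
  have "\<not> f l < s" using r_char[of l] assms by simp
  then show ?thesis using E'_R[of l j] pv(2)[of l "j - k"] assms by auto
qed

lemma e2: assumes "l < k" "j' < s" shows "E' $$ (l, k + j') = R $$ (l, j')"
  using E'_R[of l "k + j'"] assms by auto

lemma e3: assumes "i < k" "l < k" shows "R $$ (i, f l) = (if i = l then 1 else 0)"
  using pv(4)[of l] pv(5)[of l i] no_zero_row[of l] assms by auto

lemma pivA: assumes "r \<le> l" "l < k" "u < k"
  shows "f l - s < k" "E' $$ (u, f l - s) = (if u = l then 1 else 0)"
proof -
  have fl: "s \<le> f l" "f l < n" using r_char[of l] no_zero_row[of l] assms by auto
  then show "f l - s < k" by auto
  then show "E' $$ (u, f l - s) = (if u = l then 1 else 0)"
    using E'_R[of u "f l - s"] fl e3[of u l] assms kn by auto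
qed

end


lemma transpose_mult_vec_index:
  assumes "A \<in> carrier_mat m n'" "y \<in> carrier_vec m" "j < n'"
  shows "(A\<^sup>T *\<^sub>v y) $ j = (\<Sum>u = 0..<m. A $$ (u, j) * y $ u)"
  using assms by (auto simp: scalar_prod_def intro!: sum.cong)

context L45 begin

definition "B = mat (k - r) n (\<lambda>(i,j). E' $$ (i + r, j))"

lemma Bc: "B \<in> carrier_mat (k - r) n" by (simp add: B_def)

lemma B_piv: assumes "i < k - r" "u < k - r"
  shows "f (i + r) - s < n" "B $$ (u, f (i + r) - s) = (if u = i then 1 else 0)"
proof -
  have l: "r \<le> i + r" "i + r < k" "u + r < k" using assms by auto
  show "f (i + r) - s < n" using pivA(1)[OF l] kn by simp
  then show "B $$ (u, f (i + r) - s) = (if u = i then 1 else 0)"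
    using pivA(2)[OF l] assms by (simp add: B_def)
qed

lemma B_U0: assumes "i < k - r" "k \<le> j" "j < n" shows "B $$ (i, j) = 0"
  using e1[of "i + r" j] assms by (simp add: B_def)

lemma distinct_rows_B: "distinct (rows B)"
proof -
  have "row B i \<noteq> row B i'" if "i < k - r" "i' < k - r" "i \<noteq> i'" for i i'
  proof
    assume "row B i = row B i'"
    then have "row B i $ (f (i + r) - s) = row B i' $ (f (i + r) - s)" by simp
    then show False using B_piv[of i i] B_piv[of i i'] that Bc by auto
  qed
  then show ?thesis using Bc unfolding distinct_conv_nth by auto
qed

lemma E'_trans: assumes "y \<in> carrier_vec k" "j < n"
  shows "(E'\<^sup>T *\<^sub>v y) $ j = (\<Sum>u = 0..<k. E' $$ (u, j) * y $ u)"
  by (rule transpose_mult_vec_index[OF E'c assms])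

lemma B_trans: assumes "y \<in> carrier_vec (k - r)" "j < n"
  shows "(B\<^sup>T *\<^sub>v y) $ j = (\<Sum>i = 0..<k - r. E' $$ (i + r, j) * y $ i)"
  using transpose_mult_vec_index[OF Bc assms] assms by (simp add: B_def)

lemma dim_row_space_B: "subspace_dim n (vec_space.row_space n B) = k - r"
proof -
  interpret vn: vec_space "TYPE('a)" n .

  have BT: "B\<^sup>T \<in> carrier_mat n (k - r)" using Bc by simp
  have lin_indpt_B: "vn.lin_indpt (set (rows B))"
  proof
    assume ld: "vn.lin_dep (set (rows B))"
    obtain v where v: "v \<in> carrier_vec (k - r)" "v \<noteq> 0\<^sub>v (k - r)" "B\<^sup>T *\<^sub>v v = 0\<^sub>v n"
      using vn.lin_depE[OF BT] ld distinct_rows_B by auto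
    have "v $ i = 0" if i: "i < k - r" for i
    proof -
      have c: "f (i + r) - s < n" using B_piv(1)[OF i i] .
      have "(B\<^sup>T *\<^sub>v v) $ (f (i + r) - s) = (\<Sum>u = 0..<k - r. B $$ (u, f (i + r) - s) * v $ u)"
        by (rule transpose_mult_vec_index[OF Bc v(1) c])
      also have "\<dots> = (\<Sum>u = 0..<k - r. (if u = i then v $ u else 0))"
        by (rule sum.cong) (use B_piv(2)[OF i] in auto)
      also have "\<dots> = v $ i" using i by simp
      finally show ?thesis using v(3) c by simp
    qed
    then have "v = 0\<^sub>v (k - r)" using v(1) by (intro eq_vecI) auto
    then show False using v(2) by simp
  qed
  let ?S = "set (rows B)"
  have sub: "?S \<subseteq> carrier_vec n" using Bc by (auto simp: rows_def)
  have max: "maximal ?S (\<lambda>T. T \<subseteq> ?S \<and> vn.lin_indpt T)"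
    using lin_indpt_B unfolding maximal_def by auto
  have "vectorspace.dim class_ring (vn.span_vs ?S) = card ?S"
    using vn.dim_span[OF _ _ max] sub by simp
  moreover have "card ?S = k - r" using distinct_card[OF distinct_rows_B] Bc by simp
  ultimately show ?thesis unfolding subspace_dim_def vn.row_space_def by simp
qed

lemma P_inv: "invertible_mat P"
  unfolding invertible_mat_def inverts_mat_def using P Q PQ QP by auto

lemma row_space_E_U0: "vec_space.row_space n E \<inter> U0 k n = vec_space.row_space n B"
proof -
  interpret vn: vec_space "TYPE('a)" n .
  have RE: "vn.row_space E = vn.row_space E'"
    unfolding E'_def by (rule vn.row_space_is_preserved[OF P_inv P E, symmetric])
  have rsE': "vn.row_space E' = {w\<in>carrier_vec n. \<exists>y\<in>carrier_vec k. E'\<^sup>T *\<^sub>v y = w}"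
    using vn.row_space_eq[OF E'c] E'c by simp
  have rsB: "vn.row_space B = {w\<in>carrier_vec n. \<exists>y\<in>carrier_vec (k - r). B\<^sup>T *\<^sub>v y = w}"
    using vn.row_space_eq[OF Bc] Bc by simp
  show ?thesis
  proof (intro equalityI subsetI)
    fix w assume "w \<in> vn.row_space E \<inter> U0 k n"
    then obtain y where y: "y \<in> carrier_vec k" "w = E'\<^sup>T *\<^sub>v y" and w: "w \<in> carrier_vec n"
      and wU: "\<And>j. k \<le> j \<Longrightarrow> j < n \<Longrightarrow> w $ j = 0"
      unfolding RE rsE' U0_def by auto
    have y0: "y $ i = 0" if i: "i < r" for i
    proof -
      have ik: "i < k" using i r_le by simp
      have fi: "f i < s" using r_char[OF ik] i by simp
      have j: "k + f i < n" "k \<le> k + f i" using fi kn by auto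
      have "w $ (k + f i) = (\<Sum>u = 0..<k. E' $$ (u, k + f i) * y $ u)"
        using E'_trans[OF y(1) j(1)] y(2) by simp
      also have "\<dots> = (\<Sum>u = 0..<k. (if u = i then y $ u else 0))"
        by (rule sum.cong) (use e2[OF _ fi] e3[OF _ ik] in auto)
      also have "\<dots> = y $ i" using ik by simp
      finally show ?thesis using wU[OF j(2) j(1)] by simp
    qed
    define y' where "y' = vec (k - r) (\<lambda>i. y $ (i + r))"
    have y': "y' \<in> carrier_vec (k - r)" by (simp add: y'_def)
    have "B\<^sup>T *\<^sub>v y' = w"
    proof (rule eq_vecI)
      show "dim_vec (B\<^sup>T *\<^sub>v y') = dim_vec w" using w Bc by simp
      fix j assume "j < dim_vec w"
      then have j: "j < n" using w by simp
      have "(B\<^sup>T *\<^sub>v y') $ j = (\<Sum>i = 0..<k - r. E' $$ (i + r, j) * y $ (i + r))"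
        using B_trans[OF y' j] by (simp add: y'_def)
      also have "\<dots> = (\<Sum>u = 0..<k. E' $$ (u, j) * y $ u)"
        by (rule sum_shift_zero[symmetric]) (use r_le y0 in auto)
      also have "\<dots> = w $ j" using E'_trans[OF y(1) j] y(2) by simp
      finally show "(B\<^sup>T *\<^sub>v y') $ j = w $ j" .
    qed
    then show "w \<in> vn.row_space B" unfolding rsB using w y' by auto
  next
    fix w assume "w \<in> vn.row_space B"
    then obtain y' where y': "y' \<in> carrier_vec (k - r)" "w = B\<^sup>T *\<^sub>v y'" and w: "w \<in> carrier_vec n"
      unfolding rsB by auto
    define y where "y = vec k (\<lambda>u. if u < r then 0 else y' $ (u - r))"
    have y: "y \<in> carrier_vec k" by (simp add: y_def)
    have "E'\<^sup>T *\<^sub>v y = w"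
    proof (rule eq_vecI)
      show "dim_vec (E'\<^sup>T *\<^sub>v y) = dim_vec w" using w E'c by simp
      fix j assume "j < dim_vec w"
      then have j: "j < n" using w by simp
      have "(E'\<^sup>T *\<^sub>v y) $ j = (\<Sum>u = 0..<k. E' $$ (u, j) * y $ u)" by (rule E'_trans[OF y j])
      also have "\<dots> = (\<Sum>i = 0..<k - r. E' $$ (i + r, j) * y $ (i + r))"
        by (rule sum_shift_zero) (use r_le in \<open>auto simp: y_def\<close>)
      also have "\<dots> = (\<Sum>i = 0..<k - r. E' $$ (i + r, j) * y' $ i)"
        by (rule sum.cong) (auto simp: y_def)
      also have "\<dots> = w $ j" using B_trans[OF y'(1) j] y'(2) by simp
      finally show "(E'\<^sup>T *\<^sub>v y) $ j = w $ j" .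
    qed
    then have "w \<in> vn.row_space E" unfolding RE rsE' using w y by auto
    moreover have "w \<in> U0 k n"
      unfolding U0_def
    proof (intro CollectI conjI allI impI)
      show "w \<in> carrier_vec n" by (rule w)
      fix j assume "k \<le> j \<and> j < n"
      then show "w $ j = 0" using B_trans[OF y'(1), of j] y'(2) B_U0 by (simp add: B_def)
    qed
    ultimately show "w \<in> vn.row_space E \<inter> U0 k n" by simp
  qed
qed

lemma dim_part: "subspace_dim n (vec_space.row_space n E \<inter> U0 k n) = k - r"
  using row_space_E_U0 dim_row_space_B by simp

end


locale L45p = L45 E k n P Q R f for E :: "'a::field mat" and k n P Q R f +
  fixes phi :: "'a \<Rightarrow> 'b::field"
  assumes phi0: "phi 0 = 0" and phi1: "phi 1 = 1"
    and phiadd: "\<And>x y. phi (x + y) = phi x + phi y"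
    and phimult: "\<And>x y. phi (x * y) = phi x * phi y"
begin

abbreviation Phi :: "'a \<Rightarrow> 'b mpoly" where "Phi a \<equiv> mp_const (phi a)"

lemma Phi_hom: "comm_ring_hom Phi"
  by unfold_locales (auto simp: phi0 phi1 phiadd phimult mp_const_add mp_const_mult mp_const_one mp_const_zero)

lemma phi_nz: "x \<noteq> 0 \<Longrightarrow> phi x \<noteq> 0"
  using phimult[of x "inverse x"] phi1 by auto

abbreviation IXb :: "'b mpoly mat" where "IXb \<equiv> IX_mat k n"

definition "N = IX_mat k n * (map_mat Phi E')\<^sup>T"

lemma IXc: "IX_mat k n \<in> carrier_mat k n" by (simp add: IX_mat_def)
lemma mE'T: "(map_mat Phi E')\<^sup>T \<in> carrier_mat n k" using E'c by auto
lemma Nc: "N \<in> carrier_mat k k" unfolding N_def by (rule mult_carrier_mat[OF IXc mE'T])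

lemma fE_N: "f_E phi k n E * Phi (det P) = det N"
proof -
  interpret H: comm_ring_hom Phi by (rule Phi_hom)
  have mE: "map_mat Phi E \<in> carrier_mat k n" using E by simp
  have mP: "map_mat Phi P \<in> carrier_mat k k" using P by simp
  have "map_mat Phi E' = map_mat Phi P * map_mat Phi E"
    unfolding E'_def by (rule H.mat_hom_mult[OF P E])
  then have "(map_mat Phi E')\<^sup>T = (map_mat Phi E)\<^sup>T * (map_mat Phi P)\<^sup>T"
    using transpose_mult[OF mP mE] by simp
  then have "N = (IX_mat k n * (map_mat Phi E)\<^sup>T) * (map_mat Phi P)\<^sup>T"
  proof -
    have a: "(map_mat Phi E)\<^sup>T \<in> carrier_mat n k" "(map_mat Phi P)\<^sup>T \<in> carrier_mat k k" using mE mP by auto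
    show ?thesis unfolding N_def using assoc_mult_mat[OF IXc a] \<open>(map_mat Phi E')\<^sup>T = _\<close> by simp
  qed
  then have "det N = det (IX_mat k n * (map_mat Phi E)\<^sup>T) * det ((map_mat Phi P)\<^sup>T)"
  proof -
    have t: "(map_mat Phi E)\<^sup>T \<in> carrier_mat n k" using mE by auto
    have a: "IX_mat k n * (map_mat Phi E)\<^sup>T \<in> carrier_mat k k" "(map_mat Phi P)\<^sup>T \<in> carrier_mat k k"
      using mP mult_carrier_mat[OF IXc t] by auto
    show ?thesis using det_mult[OF a] \<open>N = _\<close> by simp
  qed
  also have "det ((map_mat Phi P)\<^sup>T) = Phi (det P)"
    using det_transpose[OF mP] H.hom_det by simp
  finally show ?thesis unfolding f_E_def by simp
qed

lemma N_entry: assumes "i < k" "l < k"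
  shows "N $$ (i, l) = (\<Sum>j = 0..<n. IX_mat k n $$ (i, j) * Phi (E' $$ (l, j)))"
proof -
  have d: "dim_row (IX_mat k n) = k" "dim_col (IX_mat k n) = n" "dim_row E' = k" "dim_col E' = n"
    using E'c by (auto simp: IX_mat_def)
  show ?thesis using assms by (simp add: N_def scalar_prod_def d)
qed

lemma IX_entry: "i < k \<Longrightarrow> j < n \<Longrightarrow> IXb $$ (i, j) =
   (if j < k then (if i = j then 1 else 0) else mp_var (i * (n - k) + (j - k)))"
  by (simp add: IX_mat_def)

lemma td_N: assumes i: "i < k" and l: "l < k"
  shows "total_degree (N $$ (i, l)) \<le> (if l < r then 1 else 0)"
  unfolding N_entry[OF i l]
proof (rule td_sum)
  fix j assume "j \<in> {0..<n}"
  then have j: "j < n" by simp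
  show "total_degree (IXb $$ (i, j) * Phi (E' $$ (l, j))) \<le> (if l < r then 1 else 0)"
  proof (cases "j < k")
    case True
    have "total_degree (IXb $$ (i, j) * Phi (E' $$ (l, j))) \<le>
        total_degree (IXb $$ (i, j)) + total_degree (Phi (E' $$ (l, j)))" by (rule td_mult)
    also have "\<dots> = 0" using True IX_entry[OF i j] by (simp add: td_mp_const td_one td_zero)
    finally show ?thesis by simp
  next
    case False
    show ?thesis
    proof (cases "l < r")
      case True
      have "total_degree (IXb $$ (i, j) * Phi (E' $$ (l, j))) \<le>
        total_degree (IXb $$ (i, j)) + total_degree (Phi (E' $$ (l, j)))" by (rule td_mult)
      also have "\<dots> \<le> 1" using False IX_entry[OF i j] td_mp_var by (simp add: td_mp_const)
      finally show ?thesis using True by simp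
    next
      case lr: False
      have "E' $$ (l, j) = 0" using e1[OF l _ _ j] lr False by simp
      then show ?thesis by (simp add: phi0 mp_const_zero td_zero)
    qed
  qed
qed

lemma td_det_N: "total_degree (det N) \<le> r"
  unfolding det_def'[OF Nc]
proof (rule td_sum)
  fix p assume "p \<in> {p. p permutes {0..<k}}"
  then have p: "p permutes {0..<k}" by simp
  let ?b = "\<lambda>l. if l < r then 1 else (0::nat)"
  have "total_degree (signof p * (\<Prod>i = 0..<k. N $$ (i, p i))) \<le>
        total_degree (signof p :: 'b mpoly) + total_degree (\<Prod>i = 0..<k. N $$ (i, p i))"
    by (rule td_mult)
  also have "\<dots> = total_degree (\<Prod>i = 0..<k. N $$ (i, p i))" by (simp add: td_of_int)
  also have "\<dots> \<le> (\<Sum>i = 0..<k. total_degree (N $$ (i, p i)))" by (rule td_prod)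
  also have "\<dots> \<le> (\<Sum>i = 0..<k. ?b (p i))"
    by (rule sum_mono) (use td_N permutes_in_image[OF p] in auto)
  also have "(\<Sum>i = 0..<k. ?b (p i)) = (\<Sum>l = 0..<k. ?b l)"
    using sum.permute[OF p, of ?b] by (simp add: o_def)
  also have "(\<Sum>l = 0..<k. ?b l) = card ({0..<k} \<inter> {l. l < r})"
    by (simp add: sum.If_cases)
  also have "{0..<k} \<inter> {l. l < r} = {0..<r}" using r_le by auto
  finally show "total_degree (signof p * (\<Prod>i = 0..<k. N $$ (i, p i))) \<le> r" by simp
qed

lemma td_fE_le: "total_degree (f_E phi k n E) \<le> r"
proof -
  let ?c = "det P"
  have "Phi ?c * Phi (inverse ?c) = 1"
  proof -
    have "?c * inverse ?c = 1" using det_P_nz by simp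
    then have "phi ?c * phi (inverse ?c) = 1" using phimult phi1 by metis
    then show ?thesis using mp_const_mult mp_const_one by metis
  qed
  then have "f_E phi k n E = f_E phi k n E * (Phi ?c * Phi (inverse ?c))" by simp
  also have "\<dots> = (f_E phi k n E * Phi ?c) * Phi (inverse ?c)" by (rule mult.assoc[symmetric])
  also have "\<dots> = det N * Phi (inverse ?c)" unfolding fE_N ..
  finally have "f_E phi k n E = det N * Phi (inverse ?c)" .
  also have "total_degree \<dots> \<le> total_degree (det N) + total_degree (Phi (inverse ?c))" by (rule td_mult)
  also have "\<dots> \<le> r" using td_det_N by (simp add: td_mp_const)
  finally show ?thesis .
qed

end


lemma prod_list_map_upt: "prod_list (map f [0..<m]) = (\<Prod>i = 0..<m. f i)"
  by (induct m) auto

context L45p begin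

definition "J = (\<lambda>l. f l - s) ` {r..<k}"

lemma J_sub: "J \<subseteq> {0..<k}"
  unfolding J_def using pivA(1) by auto

lemma J_mem: "r \<le> u \<Longrightarrow> u < k \<Longrightarrow> f u - s \<in> J"
  unfolding J_def by auto

lemma card_J: "card J = k - r"
proof -
  have "inj_on (\<lambda>l. f l - s) {r..<k}"
  proof (rule inj_onI)
    fix x y assume x: "x \<in> {r..<k}" and y: "y \<in> {r..<k}" and e: "f x - s = f y - s"
    have "s \<le> f x" "s \<le> f y" using r_char[of x] r_char[of y] x y by auto
    then have "f x = f y" using e by simp
    then show "x = y" using f_inj x y by auto
  qed
  then show ?thesis unfolding J_def by (simp add: card_image)
qed

lemma card_C: "card ({0..<k} - J) = r"
  using card_Diff_subset[OF finite_subset[OF J_sub] J_sub] card_J r_le by simp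

definition "g = (SOME g. bij_betw g {0..<r} ({0..<k} - J))"

lemma g_bij: "bij_betw g {0..<r} ({0..<k} - J)"
proof -
  have "\<exists>g. bij_betw g {0..<r} ({0..<k} - J)"
    using ex_bij_betw_nat_finite[of "{0..<k} - J"] card_C by auto
  then show ?thesis unfolding g_def by (rule someI_ex)
qed

lemma g_props: assumes "l < r" shows "g l < k" "g l \<notin> J"
  using bij_betw_apply[OF g_bij, of l] assms by auto

lemma g_inj: "l < r \<Longrightarrow> l' < r \<Longrightarrow> g l = g l' \<Longrightarrow> l = l'"
  using bij_betw_imp_inj_on[OF g_bij] by (auto dest: inj_onD)

definition "finv j = (THE l. l < r \<and> f l = j)"

lemma finv: assumes "l < r" shows "finv (f l) = l"
  unfolding finv_def
proof (rule the_equality)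
  show "l < r \<and> f l = f l" using assms by simp
  fix l' assume "l' < r \<and> f l' = f l"
  then show "l' = l" using f_inj[of l' l] assms r_le by auto
qed

definition sv :: "nat \<Rightarrow> 'b poly" where
  "sv v = (if v div s < k \<and> (\<exists>l<r. f l = v mod s) then
     [: - phi (E' $$ (finv (v mod s), v div s)), (if v div s = g (finv (v mod s)) then 1 else 0) :] else 0)"

lemma s_pos: "0 < s" using kn by simp

lemma sv_deg: "degree (sv v) \<le> 1"
  unfolding sv_def by auto

lemma sv_at: assumes "i < k" "j' < s"
  shows "sv (i * s + j') = (if \<exists>l<r. f l = j' then
     [: - phi (E' $$ (finv j', i)), (if i = g (finv j') then 1 else 0) :] else 0)"
proof -
  have d: "(i * s + j') div s = i" "(i * s + j') mod s = j'" using assms s_pos by auto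
  show ?thesis unfolding sv_def d using assms(1) by simp
qed

abbreviation h :: "'b mpoly \<Rightarrow> 'b poly" where "h \<equiv> mp_ev sv"

abbreviation Cst :: "'a \<Rightarrow> 'b poly" where "Cst a \<equiv> [: phi a :]"

lemma Cst_hom: "comm_ring_hom Cst"
  by unfold_locales (auto simp: phi0 phi1 phiadd phimult mult_to_poly pCons_one)

definition "Y = map_mat h IXb"
definition "Z = Y * (map_mat Cst E')\<^sup>T"
definition "Z0 = mat k k (\<lambda>(i,l). if l < r then (if i = g l then 1 else 0) else E' $$ (l, i))"
definition "Dg = mat k k (\<lambda>(i,j). if i = j then (if i < r then [:0,1:] else 1) else (0 :: 'b poly))"

lemma Yc: "Y \<in> carrier_mat k n" by (simp add: Y_def IX_mat_def)
lemma Z0c: "Z0 \<in> carrier_mat k k" by (simp add: Z0_def)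
lemma Dgc: "Dg \<in> carrier_mat k k" by (simp add: Dg_def)

lemma Y_entry: assumes "i < k" "j < n"
  shows "Y $$ (i, j) = (if j < k then (if i = j then 1 else 0) else sv (i * s + (j - k)))"
  using assms by (simp add: Y_def IX_mat_def mp_ev_var mp_ev_one mp_ev_zero)

lemma hN: "h (det N) = det Z"
proof -
  interpret Hh: comm_ring_hom h by (rule mp_ev_hom)
  have "map_mat h N = map_mat h IXb * map_mat h ((map_mat Phi E')\<^sup>T)"
    unfolding N_def by (rule Hh.mat_hom_mult[OF IXc mE'T])
  also have "map_mat h ((map_mat Phi E')\<^sup>T) = (map_mat Cst E')\<^sup>T"
    by (rule eq_matI) (auto simp: mp_ev_const)
  finally have "map_mat h N = Z" by (simp add: Z_def Y_def)
  then show ?thesis using Hh.hom_det[of N] by simp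
qed

lemma Z_entry: assumes i: "i < k" and l: "l < k"
  shows "Z $$ (i, l) = (if l < r then (if i = g l then [:0,1:] else 0) else Cst (E' $$ (l, i)))"
proof -
  let ?c = "\<lambda>j. Cst (E' $$ (l, j))"
  have d: "dim_row Y = k" "dim_col Y = n" "dim_row E' = k" "dim_col E' = n" using Yc E'c by auto
  have "Z $$ (i, l) = (\<Sum>j = 0..<n. Y $$ (i, j) * ?c j)"
    using assms by (simp add: Z_def scalar_prod_def d)
  also have "\<dots> = (\<Sum>j = 0..<k. Y $$ (i, j) * ?c j) + (\<Sum>j = k..<n. Y $$ (i, j) * ?c j)"
    using kn by (simp add: sum.atLeastLessThan_concat)
  also have "(\<Sum>j = 0..<k. Y $$ (i, j) * ?c j) = ?c i"
  proof -
    have "(\<Sum>j = 0..<k. Y $$ (i, j) * ?c j) = (\<Sum>j = 0..<k. if i = j then ?c j else 0)"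
      by (rule sum.cong) (use Y_entry[OF i] kn in auto)
    also have "\<dots> = ?c i" using i by simp
    finally show ?thesis .
  qed
  also have "(\<Sum>j = k..<n. Y $$ (i, j) * ?c j) = (\<Sum>j' = 0..<s. sv (i * s + j') * ?c (j' + k))"
  proof -
    have "(\<Sum>j = k..<n. Y $$ (i, j) * ?c j) = (\<Sum>j = 0 + k..<s + k. Y $$ (i, j) * ?c j)"
      using kn by simp
    also have "\<dots> = (\<Sum>j' = 0..<s. Y $$ (i, j' + k) * ?c (j' + k))"
      by (rule sum.shift_bounds_nat_ivl)
    also have "\<dots> = (\<Sum>j' = 0..<s. sv (i * s + j') * ?c (j' + k))"
      by (rule sum.cong) (use Y_entry[OF i] in auto)
    finally show ?thesis .
  qed
  finally have Zs: "Z $$ (i, l) = ?c i + (\<Sum>j' = 0..<s. sv (i * s + j') * ?c (j' + k))" .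
  show ?thesis
  proof (cases "l < r")
    case False
    have "(\<Sum>j' = 0..<s. sv (i * s + j') * ?c (j' + k)) = 0"
      by (rule sum.neutral) (use e1[OF l] False in \<open>auto simp: phi0\<close>)
    then show ?thesis using Zs False by simp
  next
    case True
    have flk: "f l < s" using r_char[OF l] True by simp
    have "(\<Sum>j' = 0..<s. sv (i * s + j') * ?c (j' + k)) =
      (\<Sum>j' = 0..<s. if j' = f l then [: - phi (E' $$ (l, i)), (if i = g l then 1 else 0) :] else 0)"
    proof (rule sum.cong)
      fix j' assume "j' \<in> {0..<s}"
      then have j': "j' < s" by simp
      have ck: "?c (j' + k) = Cst (R $$ (l, j'))" using e2[OF l j'] by (simp add: add.commute)
      show "sv (i * s + j') * ?c (j' + k) =
        (if j' = f l then [: - phi (E' $$ (l, i)), (if i = g l then 1 else 0) :] else 0)"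
      proof (cases "j' = f l")
        case True
        have "R $$ (l, j') = 1" using e3[OF l l] True by simp
        then show ?thesis using sv_at[OF i j'] True \<open>l < r\<close> finv ck by (auto simp: phi1 pCons_one)
      next
        case jn: False
        show ?thesis
        proof (cases "\<exists>l'<r. f l' = j'")
          case True
          then obtain l' where l': "l' < r" "f l' = j'" by blast
          then have "l' \<noteq> l" using jn by auto
          then have "R $$ (l, j') = 0" using e3[OF l, of l'] l' r_le by auto
          then show ?thesis using ck jn by (simp add: phi0)
        next
          case False
          show ?thesis unfolding sv_at[OF i j'] if_not_P[OF False] using jn by simp
        qed
      qed
    qed simp
    also have "\<dots> = [: - phi (E' $$ (l, i)), (if i = g l then 1 else 0) :]" using flk by simp
    finally show ?thesis using Zs True by simp
  qed
qed

lemma Z_fact: "Z = map_mat Cst Z0 * Dg"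
proof (rule eq_matI)
  show "dim_row Z = dim_row (map_mat Cst Z0 * Dg)" "dim_col Z = dim_col (map_mat Cst Z0 * Dg)"
    using Yc E'c Z0c Dgc by (auto simp: Z_def)
  fix i l assume "i < dim_row (map_mat Cst Z0 * Dg)" "l < dim_col (map_mat Cst Z0 * Dg)"
  then have i: "i < k" and l: "l < k" using Z0c Dgc by auto
  have "(map_mat Cst Z0 * Dg) $$ (i, l) = (\<Sum>j = 0..<k. Cst (Z0 $$ (i, j)) * Dg $$ (j, l))"
    using i l Z0c Dgc by (simp add: scalar_prod_def)
  also have "\<dots> = (\<Sum>j = 0..<k. if j = l then Cst (Z0 $$ (i, l)) * Dg $$ (l, l) else 0)"
    by (rule sum.cong) (use l in \<open>auto simp: Dg_def\<close>)
  also have "\<dots> = Cst (Z0 $$ (i, l)) * Dg $$ (l, l)" using l by simp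
  also have "\<dots> = Z $$ (i, l)" using Z_entry[OF i l] i l by (auto simp: Z0_def Dg_def phi0 phi1 pCons_one)
  finally show "Z $$ (i, l) = (map_mat Cst Z0 * Dg) $$ (i, l)" by simp
qed

lemma det_Dg: "det Dg = [:0,1:] ^ r"
proof -
  have "upper_triangular Dg" by (auto simp: upper_triangular_def Dg_def)
  then have "det Dg = prod_list (diag_mat Dg)" using det_upper_triangular Dgc by blast
  also have "\<dots> = (\<Prod>i = 0..<k. if i < r then [:0,1:] else 1)"
    by (simp add: diag_mat_def prod_list_map_upt Dg_def)
  also have "\<dots> = [:0,1:] ^ card ({0..<k} \<inter> {i. i < r})"
    by (simp add: prod.If_cases)
  also have "{0..<k} \<inter> {i. i < r} = {0..<r}" using r_le by auto
  finally show ?thesis by simp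
qed

lemma det_Z0: "det Z0 \<noteq> 0"
proof
  assume "det Z0 = 0"
  then obtain v where v: "v \<in> carrier_vec k" "v \<noteq> 0\<^sub>v k" "Z0 *\<^sub>v v = 0\<^sub>v k"
    using det_0_iff_vec_prod_zero[OF Z0c] by blast
  have Zv: "(\<Sum>l = 0..<k. Z0 $$ (i, l) * v $ l) = 0" if i: "i < k" for i
  proof -
    have "(Z0 *\<^sub>v v) $ i = (\<Sum>l = 0..<k. Z0 $$ (i, l) * v $ l)"
      using i v(1) Z0c by (auto simp: scalar_prod_def intro!: sum.cong)
    then show ?thesis using v(3) i by simp
  qed
  have vJ: "v $ u = 0" if u: "r \<le> u" "u < k" for u
  proof -
    have ik: "f u - s < k" using pivA(1)[OF u u(2)] .
    have "(\<Sum>l = 0..<k. Z0 $$ (f u - s, l) * v $ l) = (\<Sum>l = 0..<k. if l = u then v $ l else 0)"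
    proof (rule sum.cong)
      fix l assume "l \<in> {0..<k}"
      then have l: "l < k" by simp
      show "Z0 $$ (f u - s, l) * v $ l = (if l = u then v $ l else 0)"
      proof (cases "l < r")
        case True
        then have "g l \<noteq> f u - s" using g_props(2)[OF True] J_mem[OF u] by auto
        then show ?thesis using True l ik u by (auto simp: Z0_def)
      next
        case False
        then show ?thesis using pivA(2)[OF u l] l ik by (auto simp: Z0_def)
      qed
    qed simp
    also have "\<dots> = v $ u" using u by simp
    finally show ?thesis using Zv[OF ik] by simp
  qed
  have vr: "v $ l0 = 0" if l0: "l0 < r" for l0
  proof -
    have ik: "g l0 < k" using g_props(1)[OF l0] .
    have "(\<Sum>l = 0..<k. Z0 $$ (g l0, l) * v $ l) = (\<Sum>l = 0..<k. if l = l0 then v $ l else 0)"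
    proof (rule sum.cong)
      fix l assume "l \<in> {0..<k}"
      then have l: "l < k" by simp
      show "Z0 $$ (g l0, l) * v $ l = (if l = l0 then v $ l else 0)"
      proof (cases "l < r")
        case True
        then show ?thesis using g_inj[OF l0 True] l ik by (auto simp: Z0_def)
      next
        case False
        then show ?thesis using vJ[of l] l ik l0 by (auto simp: Z0_def)
      qed
    qed simp
    also have "\<dots> = v $ l0" using l0 r_le by simp
    finally show ?thesis using Zv[OF ik] by simp
  qed
  have "v = 0\<^sub>v k"
  proof (rule eq_vecI)
    fix u assume "u < dim_vec (0\<^sub>v k)"
    then have "u < k" by simp
    then show "v $ u = 0\<^sub>v k $ u" using vJ[of u] vr[of u] by (cases "u < r") auto
  qed (use v(1) in simp)
  then show False using v(2) by simp
qed

lemma td_fE_ge: "r \<le> total_degree (f_E phi k n E)"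
proof -
  interpret Hh: comm_ring_hom h by (rule mp_ev_hom)
  interpret HC: comm_ring_hom Cst by (rule Cst_hom)
  have "h (f_E phi k n E) * [: phi (det P) :] = h (det N)"
    using fE_N[symmetric] by (simp add: Hh.hom_mult mp_ev_const)
  also have "\<dots> = det Z" by (rule hN)
  also have "\<dots> = det (map_mat Cst Z0) * det Dg"
    unfolding Z_fact by (rule det_mult) (use Z0c Dgc in auto)
  also have "\<dots> = [: phi (det Z0) :] * [:0,1:] ^ r"
    using HC.hom_det[of Z0] det_Dg by simp
  finally have eq: "h (f_E phi k n E) * [: phi (det P) :] = [: phi (det Z0) :] * [:0,1:] ^ r" .
  have c1: "phi (det Z0) \<noteq> 0" using phi_nz det_Z0 by blast
  have c2: "phi (det P) \<noteq> 0" using phi_nz det_P_nz by blast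
  have d1: "degree ([: phi (det Z0) :] * [:0,1:] ^ r) = r"
    using c1 by (simp add: degree_mult_eq degree_linear_power)
  have hnz: "h (f_E phi k n E) \<noteq> 0"
  proof
    assume "h (f_E phi k n E) = 0"
    then have "[: phi (det Z0) :] * [:0,1:] ^ r = 0" using eq by simp
    then show False using c1 by simp
  qed
  then have d2: "degree (h (f_E phi k n E) * [: phi (det P) :]) = degree (h (f_E phi k n E))"
    using c2 by (simp add: degree_mult_eq)
  have "degree (h (f_E phi k n E)) = degree (h (f_E phi k n E) * [: phi (det P) :])" by (rule d2[symmetric])
  also have "\<dots> = degree ([: phi (det Z0) :] * [:0,1:] ^ r)" by (simp only: eq)
  also have "\<dots> = r" by (rule d1)
  finally have "degree (h (f_E phi k n E)) = r" .
  moreover have "degree (h (f_E phi k n E)) \<le> total_degree (f_E phi k n E)"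
    by (rule degree_mp_ev[OF sv_deg])
  ultimately show ?thesis by simp
qed

lemma td_fE: "total_degree (f_E phi k n E) = r"
  using td_fE_le td_fE_ge by simp

end


theorem lemma4p5:
  fixes phi :: "'a::{finite,field} \<Rightarrow> 'b::{finite,field}"
    and q m k n :: nat and E :: "'a mat"
  assumes "card (UNIV :: 'a set) = q" and "\<exists>p r. prime p \<and> r \<ge> 1 \<and> q = p ^ r"
    and "m \<ge> 1" and "card (UNIV :: 'b set) = q ^ m"
    and "phi 0 = 0" and "phi 1 = 1"
    and "\<And>x y. phi (x + y) = phi x + phi y" and "\<And>x y. phi (x * y) = phi x * phi y"
    and "1 \<le> k" and "k < n"
    and "E \<in> T_set k n"
  shows "total_degree (f_E phi k n E) = k - subspace_dim n (vec_space.row_space n E \<inter> U0 k n)"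
proof -
  have E: "E \<in> carrier_mat k n" and rk: "vec_space.rank k E = k"
    using assms(11) unfolding T_set_def by auto
  have Et: "Etil k n E \<in> carrier_mat k n" by (simp add: Etil_def)
  define R where "R = gauss_jordan_single (Etil k n E)"
  note gj = gauss_jordan_single[OF Et R_def[symmetric]]
  obtain P Q where PQ: "R = P * Etil k n E" "P \<in> carrier_mat k k" "Q \<in> carrier_mat k k"
    "P * Q = 1\<^sub>m k" "Q * P = 1\<^sub>m k" using gj(4) by blast
  obtain f where f: "pivot_fun R f n"
    using gj(2,3) unfolding row_echelon_form_def by auto
  interpret L45p E k n P Q R f phi
    by unfold_locales (use E assms(10) PQ f rk assms(5-8) in auto)
  show ?thesis using td_fE dim_part r_le by simp
qed


end
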